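(* Let $n\geq 3$, let $\Omega\subset\mathbb{R}^n$ be a bounded simple rotationally symmetric domain along the $x_n$ axis, and let $f\in C^1(\mathbb{R})$ be convex. Let $u$ be a stable solution of $$-\Delta u=f(u)\ \text{in}\ \Omega,\qquad u=0\ \text{on}\ \partial\Omega.$$ Then $u$ is symmetric with respect to the hyperplane $x_n=0$, i.e. $u(x_1,\dots,x_{n-1},-x_n)=u(x_1,\dots,x_{n-1},x_n)$.
   Context: A domain $\Omega\subset\mathbb{R}^n$ is simple rotationally symmetric along the $x_n$ axis if (1) it is symmetric with respect to $x_n=0$; (2) it is invariant under every $A\in O(n)$ fixing the $x_n$ axis; (3) for each $i=1,\dots,n$, any segment joining two points of $\Omega$ and parallel to the $x_i$ axis lies in $\Omega$. A solution $u$ is stable if $\int_\Omega|\nabla\phi|^2dx-\int_\Omega f'(u)\phi^2dx>0$ for every nonzero $\phi\in H^1_0(\Omega)$; equivalently, the first Dirichlet eigenvalue of $-\Delta-f'(u)$ in $\Omega$ is positive. *)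

theory Defs
  imports "HOL-Analysis.Analysis"
begin

definition partial :: "'n::finite \<Rightarrow> (real^'n \<Rightarrow> real) \<Rightarrow> real^'n \<Rightarrow> real" where
  "partial i u x = frechet_derivative u (at x) (axis i 1)"

definition C2_on :: "(real^'n::finite) set \<Rightarrow> (real^'n \<Rightarrow> real) \<Rightarrow> bool" where
  "C2_on \<Omega> u \<longleftrightarrow> (\<forall>x\<in>\<Omega>. u differentiable (at x))
     \<and> (\<forall>i. \<forall>x\<in>\<Omega>. partial i u differentiable (at x))
     \<and> (\<forall>i. continuous_on \<Omega> (partial i u))
     \<and> (\<forall>i j. continuous_on \<Omega> (partial j (partial i u)))"

definition laplacian :: "(real^'n::finite \<Rightarrow> real) \<Rightarrow> real^'n \<Rightarrow> real" where
  "laplacian u x = (\<Sum>i\<in>UNIV. partial i (partial i u) x)"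

definition reflect :: "'n::finite \<Rightarrow> real^'n \<Rightarrow> real^'n" where
  "reflect k x = (\<chi> i. if i = k then - (x $ i) else x $ i)"

definition simple_rot_sym :: "'n::finite \<Rightarrow> (real^'n) set \<Rightarrow> bool" where
  "simple_rot_sym k \<Omega> \<longleftrightarrow>
     (\<forall>x\<in>\<Omega>. reflect k x \<in> \<Omega>)
   \<and> (\<forall>A::real^'n^'n. orthogonal_matrix A \<and> A *v axis k 1 = axis k 1 \<longrightarrow> (\<forall>x\<in>\<Omega>. A *v x \<in> \<Omega>))
   \<and> (\<forall>i. \<forall>x\<in>\<Omega>. \<forall>y\<in>\<Omega>. (\<forall>j. j \<noteq> i \<longrightarrow> x $ j = y $ j) \<longrightarrow> closed_segment x y \<subseteq> \<Omega>)"

text \<open>Test functions: C^1 functions on R^n with compact support contained in Omega (dense in H^1_0).\<close>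
definition test_fun :: "(real^'n::finite) set \<Rightarrow> (real^'n \<Rightarrow> real) \<Rightarrow> bool" where
  "test_fun \<Omega> \<phi> \<longleftrightarrow> (\<forall>x. \<phi> differentiable (at x))
     \<and> (\<forall>i. continuous_on UNIV (partial i \<phi>))
     \<and> compact (closure {x. \<phi> x \<noteq> 0}) \<and> closure {x. \<phi> x \<noteq> 0} \<subseteq> \<Omega>"

definition rayleigh :: "(real^'n::finite) set \<Rightarrow> (real^'n \<Rightarrow> real) \<Rightarrow> (real^'n \<Rightarrow> real) \<Rightarrow> real" where
  "rayleigh \<Omega> V \<phi> =
     (integral \<Omega> (\<lambda>x. \<Sum>i\<in>UNIV. (partial i \<phi> x)^2) - integral \<Omega> (\<lambda>x. V x * (\<phi> x)^2))
     / integral \<Omega> (\<lambda>x. (\<phi> x)^2)"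

definition first_dirichlet_eigenvalue :: "(real^'n::finite) set \<Rightarrow> (real^'n \<Rightarrow> real) \<Rightarrow> real" where
  "first_dirichlet_eigenvalue \<Omega> V = Inf {rayleigh \<Omega> V \<phi> | \<phi>. test_fun \<Omega> \<phi> \<and> (\<exists>x. \<phi> x \<noteq> 0)}"

definition stable :: "(real^'n::finite) set \<Rightarrow> (real \<Rightarrow> real) \<Rightarrow> (real^'n \<Rightarrow> real) \<Rightarrow> bool" where
  "stable \<Omega> f' u \<longleftrightarrow> first_dirichlet_eigenvalue \<Omega> (\<lambda>x. f' (u x)) > 0"

end

theory Submission
  imports Defs
begin


lemma piece_deriv:
  fixes f g f' g' :: "real \<Rightarrow> real"
  assumes "\<And>x. (f has_real_derivative f' x) (at x)" "\<And>x. (g has_real_derivative g' x) (at x)"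
    "f a = g a" "f' a = g' a"
  shows "((\<lambda>x. if x \<le> a then f x else g x) has_real_derivative (if x \<le> a then f' x else g' x)) (at x)"
proof -
  have cl: "closure {a<..} = {a..}" by simp
  have "((\<lambda>x. if x \<in> {..a} then f x else g x) has_derivative
      (if x \<in> {..a} then (\<lambda>h. f' x * h) else (\<lambda>h. g' x * h))) (at x within ({..a} \<union> {a<..}))"
    apply (rule has_derivative_If_within_closures)
    using assms unfolding has_field_derivative_def
    by (auto intro: has_derivative_at_withinI simp: cl)
  moreover have "{..a} \<union> {a<..} = (UNIV::real set)" by auto
  ultimately show ?thesis unfolding has_field_derivative_def
    by (auto split: if_splits)
qed

definition gg :: "real \<Rightarrow> real \<Rightarrow> real" where
  "gg e t = (if t \<le> e then 0 else (if t \<le> 2*e then (t-e)^2/(2*e) else t - 3*e/2))"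
definition gd :: "real \<Rightarrow> real \<Rightarrow> real" where
  "gd e t = (if t \<le> e then 0 else (if t \<le> 2*e then (t-e)/e else 1))"
definition GG :: "real \<Rightarrow> real \<Rightarrow> real" where
  "GG e t = (if t \<le> e then 0 else (if t \<le> 2*e then (t-e)^3/(3*e^2) else t - 5*e/3))"

lemma gg_deriv: assumes "e > 0" shows "(gg e has_real_derivative gd e t) (at t)"
proof -
  have inner: "((\<lambda>t. if t \<le> 2*e then (t-e)^2/(2*e) else t - 3*e/2) has_real_derivative
      (if t \<le> 2*e then (t-e)/e else 1)) (at t)" for t
    apply (rule piece_deriv)
    using assms by (auto intro!: derivative_eq_intros simp: field_simps power2_eq_square)
  have "((\<lambda>t. if t \<le> e then 0 else (if t \<le> 2*e then (t-e)^2/(2*e) else t - 3*e/2)) has_real_derivative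
      (if t \<le> e then 0 else (if t \<le> 2*e then (t-e)/e else 1))) (at t)"
    apply (rule piece_deriv[where f'="\<lambda>_. 0"])
    using assms inner by (auto intro!: derivative_eq_intros)
  then show ?thesis unfolding gg_def[abs_def] gd_def by simp
qed

lemma GG_deriv: assumes "e > 0" shows "(GG e has_real_derivative (gd e t)^2) (at t)"
proof -
  have inner: "((\<lambda>t. if t \<le> 2*e then (t-e)^3/(3*e^2) else t - 5*e/3) has_real_derivative
      (if t \<le> 2*e then (t-e)^2/e^2 else 1)) (at t)" for t
    apply (rule piece_deriv)
    using assms by (auto intro!: derivative_eq_intros simp: field_simps power2_eq_square power3_eq_cube)
  have "((\<lambda>t. if t \<le> e then 0 else (if t \<le> 2*e then (t-e)^3/(3*e^2) else t - 5*e/3)) has_real_derivative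
      (if t \<le> e then 0 else (if t \<le> 2*e then (t-e)^2/e^2 else 1))) (at t)"
    apply (rule piece_deriv[where f'="\<lambda>_. 0"])
    using assms inner by (auto intro!: derivative_eq_intros)
  moreover have "(gd e t)^2 = (if t \<le> e then 0 else (if t \<le> 2*e then (t-e)^2/e^2 else 1))"
    by (simp add: gd_def power_divide)
  ultimately show ?thesis unfolding GG_def[abs_def] by simp
qed

lemma gd_alt: assumes "e > 0" shows "gd e = (\<lambda>t. max 0 (min 1 ((t-e)/e)))"
  using assms by (auto simp: gd_def fun_eq_iff field_simps)

lemma gd_cont: assumes "e > 0" shows "continuous_on UNIV (gd e)"
  unfolding gd_alt[OF assms] using assms by (intro continuous_intros) auto

lemma gg_zero: "t \<le> e \<Longrightarrow> gg e t = 0" and GG_zero: "t \<le> e \<Longrightarrow> GG e t = 0"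
  and gd_zero: "t \<le> e \<Longrightarrow> gd e t = 0"
  by (auto simp: gg_def GG_def gd_def)

lemma GG_nonneg: "e > 0 \<Longrightarrow> GG e t \<ge> 0"
  by (auto simp: GG_def)

lemma gg_lower: assumes "e > 0" shows "gg e t \<ge> max 0 (t - 2*e)"
proof -
  have "t \<le> 2*e \<Longrightarrow> t - 2*e \<le> (t-e)^2/(2*e)"
  proof -
    assume "t \<le> 2*e"
    moreover have "0 \<le> (t-e)^2/(2*e)" using assms by simp
    ultimately show ?thesis by linarith
  qed
  then show ?thesis using assms by (auto simp: gg_def)
qed

lemma key_ineq: assumes "e > 0"
  shows "0 \<le> t * GG e t - (gg e t)^2" "t * GG e t - (gg e t)^2 \<le> e * (e + 2 * \<bar>t\<bar>)"
proof -
  consider "t \<le> e" | "e < t" "t \<le> 2*e" | "2*e < t" by linarith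
  then have "0 \<le> t * GG e t - (gg e t)^2 \<and> t * GG e t - (gg e t)^2 \<le> e * (e + 2 * \<bar>t\<bar>)"
  proof cases
    case 1 then show ?thesis using assms by (simp add: gg_def GG_def)
  next
    case 2
    define s where "s = t - e"
    have s: "0 < s" "s \<le> e" "t = s + e" using 2 by (auto simp: s_def)
    have eq: "t * GG e t - (gg e t)^2 = s^3 * (s + 4*e) / (12 * e^2)"
      using 2 assms unfolding gg_def GG_def s_def
      by (simp add: field_simps power2_eq_square power3_eq_cube)
    have "s^3 * (s + 4*e) \<le> e^3 * (5*e)"
      using s by (intro mult_mono power_mono) auto
    then have "s^3 * (s + 4*e) / (12 * e^2) \<le> e^3 * (5*e) / (12*e^2)"
      using assms by (intro divide_right_mono) auto
    also have "\<dots> = 5*e^2/12" using assms by (simp add: field_simps power2_eq_square power3_eq_cube)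
    also have "\<dots> \<le> e * (e + 2 * \<bar>t\<bar>)" using assms by (simp add: power2_eq_square)
    finally show ?thesis using eq s assms by auto
  next
    case 3
    have eq: "t * GG e t - (gg e t)^2 = 4*e*t/3 - 9*e^2/4"
      using 3 assms unfolding gg_def GG_def
      by (simp add: field_simps power2_eq_square)
    have et: "e*t \<ge> e*(2*e)" using 3 assms by (intro mult_left_mono) auto
    have ee: "0 \<le> e*e" by simp
    have a1: "4*e*t/3 - 9*e^2/4 = (4/3)*(e*t) - (9/4)*(e*e)"
      by (simp add: power2_eq_square)
    have a2: "e*(e + 2 * \<bar>t\<bar>) = e*e + 2*(e*t)"
      using 3 assms by (simp add: abs_of_pos distrib_left)
    have a3: "e*(2*e) = 2*(e*e)" by simp
    show ?thesis unfolding eq a1 a2 using et ee a3 by linarith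
  qed
  then show "0 \<le> t * GG e t - (gg e t)^2" "t * GG e t - (gg e t)^2 \<le> e * (e + 2 * \<bar>t\<bar>)" by auto
qed



lemma cs_cont:
  fixes g :: "real^'n \<Rightarrow> real"
  assumes "open S" "closed K" "K \<subseteq> S" "continuous_on S g" "\<And>x. x \<notin> K \<Longrightarrow> g x = 0"
  shows "continuous_on UNIV g"
proof -
  have "continuous_on (-K) g"
    using assms(5) continuous_on_cong[of "-K" "-K" g "\<lambda>_. 0"] by auto
  then have "continuous_on (S \<union> -K) g"
    using assms by (intro continuous_on_open_Un) auto
  moreover have "S \<union> -K = UNIV" using assms by auto
  ultimately show ?thesis by simp
qed

lemma cs_int:
  fixes g :: "real^'n \<Rightarrow> real"
  assumes "continuous_on UNIV g" "compact K" "\<And>x. x \<notin> K \<Longrightarrow> g x = 0" "K \<subseteq> cbox a b"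
  shows "(g has_integral integral (cbox a b) g) UNIV"
proof -
  have "g integrable_on cbox a b"
    by (rule integrable_continuous, rule continuous_on_subset[OF assms(1)]) simp
  then have "(g has_integral integral (cbox a b) g) (cbox a b)" by (rule integrable_integral)
  then show ?thesis
  proof (rule has_integral_on_superset)
    show "g x = 0" if "x \<notin> cbox a b" for x using that assms(3,4) by blast
  qed simp
qed

lemma cs_int2:
  fixes g :: "real^'n \<Rightarrow> real"
  assumes "continuous_on UNIV g" "compact K" "\<And>x. x \<notin> K \<Longrightarrow> g x = 0"
  shows "g integrable_on UNIV"
proof -
  obtain a where a: "K \<subseteq> cbox (-a) a"
    using bounded_subset_cbox_symmetric[OF compact_imp_bounded[OF assms(2)]] by blast
  have "(g has_integral integral (cbox (-a) a) g) UNIV" by (rule cs_int[OF assms a])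
  then show ?thesis unfolding integrable_on_def by blast
qed

lemma cs_int_on:
  fixes g :: "real^'n \<Rightarrow> real"
  assumes "continuous_on UNIV g" "compact K" "\<And>x. x \<notin> K \<Longrightarrow> g x = 0" "K \<subseteq> S"
  shows "g integrable_on S" "integral S g = integral UNIV g"
proof -
  have eq: "(\<lambda>x. if x \<in> S then g x else 0) = g" 
  proof (rule ext)
    fix x show "(if x \<in> S then g x else 0) = g x"
      by (cases "x \<in> S") (use assms(3,4) in auto)
  qed
  show "g integrable_on S"
    using cs_int2[OF assms(1-3)] integrable_restrict_UNIV[of S g] eq by simp
  show "integral S g = integral UNIV g"
    using integral_restrict_UNIV[of S g] eq by simp
qed

lemma div_zero:
  fixes F D :: "real^'n \<Rightarrow> real" and e :: "real^'n"
  assumes dF: "\<And>x. ((\<lambda>t. F (x + t *\<^sub>R e)) has_real_derivative D x) (at 0)"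
    and cD: "continuous_on UNIV D" and cF: "continuous_on UNIV F"
    and K: "compact K" and FK: "\<And>x. x \<notin> K \<Longrightarrow> F x = 0" and DK: "\<And>x. x \<notin> K \<Longrightarrow> D x = 0"
  shows "integral UNIV D = 0"
proof -
  obtain r where r: "K \<subseteq> cball 0 r" "0 \<le> r"
  proof -
    obtain b where "b > 0" "\<forall>x\<in>K. norm x \<le> b"
      using compact_imp_bounded[OF K] unfolding bounded_pos by auto
    moreover have "K \<subseteq> cball 0 b" using calculation by (auto simp: mem_cball_0)
    ultimately show ?thesis using that[of b] by auto
  qed
  have ne0: "norm e \<ge> 0" by simp
  have ne1: "norm e + 1 > 0" using norm_ge_zero[of e] by linarith
  define \<rho> where "\<rho> = r + norm e"
  define S where "S = cball (0::real^'n) (\<rho> + norm e)"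
  obtain a where box: "S \<subseteq> cbox (-a) a"
    using bounded_subset_cbox_symmetric[of S] unfolding S_def by blast
  have Kbox: "K \<subseteq> cbox (-a) a"
  proof -
    have "cball 0 r \<subseteq> S" unfolding S_def \<rho>_def by (intro subset_cball) auto
    then show ?thesis using r box by blast
  qed
  have ucD: "uniformly_continuous_on S D"
    unfolding S_def by (intro compact_uniformly_continuous continuous_on_subset[OF cD]) auto
  have outK: "x \<notin> K" if "norm x > r" for x using r that by auto
  have U: "\<exists>\<delta>>0. \<forall>x s. \<bar>s\<bar> < \<delta> \<longrightarrow> \<bar>s\<bar> \<le> 1 \<longrightarrow> \<bar>D (x + s *\<^sub>R e) - D x\<bar> < \<eta>"
    if "\<eta> > 0" for \<eta>
  proof -
    obtain d where d: "d > 0" "\<And>x y. x \<in> S \<Longrightarrow> y \<in> S \<Longrightarrow> dist y x < d \<Longrightarrow> dist (D y) (D x) < \<eta>"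
    proof -
      from ucD[unfolded uniformly_continuous_on_def, rule_format, OF \<open>\<eta> > 0\<close>]
      obtain d where "d > 0" "\<forall>x\<in>S. \<forall>x'\<in>S. dist x' x < d \<longrightarrow> dist (D x') (D x) < \<eta>"
        by blast
      then show ?thesis using that by blast
    qed
    define \<delta> where "\<delta> = d / (norm e + 1)"
    have "\<delta> > 0" using d ne1 by (simp add: \<delta>_def)
    moreover have "\<bar>D (x + s *\<^sub>R e) - D x\<bar> < \<eta>" if "\<bar>s\<bar> < \<delta>" "\<bar>s\<bar> \<le> 1" for x s
    proof (cases "norm x \<le> \<rho>")
      case True
      have n1: "norm (s *\<^sub>R e) \<le> norm e" using that by (simp add: mult_left_le_one_le)
      have "norm x \<le> \<rho> + norm e" using True ne0 by linarith
      then have "x \<in> S" unfolding S_def by simp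
      moreover have "norm (x + s *\<^sub>R e) \<le> \<rho> + norm e"
        using norm_triangle_ineq[of x "s *\<^sub>R e"] True n1 by linarith
      then have "x + s *\<^sub>R e \<in> S" unfolding S_def by simp
      moreover have "dist (x + s *\<^sub>R e) x < d"
      proof -
        have "dist (x + s *\<^sub>R e) x = \<bar>s\<bar> * norm e" by (simp add: dist_norm)
        also have "\<dots> \<le> \<bar>s\<bar> * (norm e + 1)" by (simp add: mult_left_mono)
        also have "\<dots> < \<delta> * (norm e + 1)"
          using that ne1 by (intro mult_strict_right_mono) auto
        also have "\<dots> = d" unfolding \<delta>_def using ne1 by simp
        finally show ?thesis .
      qed
      ultimately have "dist (D (x + s *\<^sub>R e)) (D x) < \<eta>" by (rule d(2))
      then show ?thesis by (simp add: dist_real_def)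
    next
      case False
      have n1: "norm (s *\<^sub>R e) \<le> norm e" using that by (simp add: mult_left_le_one_le)
      have "norm x > r" using False ne0 unfolding \<rho>_def by linarith
      moreover have "norm x \<le> norm (x + s *\<^sub>R e) + norm (s *\<^sub>R e)"
        using norm_triangle_ineq[of "x + s *\<^sub>R e" "-(s *\<^sub>R e)"] by simp
      then have "norm (x + s *\<^sub>R e) > r"
        using False n1 unfolding \<rho>_def by linarith
      ultimately show ?thesis using outK DK \<open>\<eta> > 0\<close> by simp
    qed
    ultimately show ?thesis by blast
  qed
  have intD: "(D has_integral integral (cbox (-a) a) D) UNIV"
    using cs_int[OF cD K DK Kbox] .
  have bound: "\<bar>integral UNIV D\<bar> \<le> \<eta> * Henstock_Kurzweil_Integration.content (cbox (-a) a)" if \<eta>0: "\<eta> > 0" for \<eta>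
  proof -
    obtain \<delta> where \<delta>: "\<delta> > 0" "\<And>x s. \<bar>s\<bar> < \<delta> \<Longrightarrow> \<bar>s\<bar> \<le> 1 \<Longrightarrow> \<bar>D (x + s *\<^sub>R e) - D x\<bar> < \<eta>"
      using U[OF \<eta>0] by blast
    define h where "h = min (\<delta>/2) 1"
    have h: "h > 0" "h < \<delta>" "h \<le> 1" using \<delta> by (auto simp: h_def)
    define c where "c = h *\<^sub>R e"
    define Q where "Q x = (F (x + c) - F x) / h" for x
    have derx: "DERIV (\<lambda>t. F (x + t *\<^sub>R e)) t :> D (x + t *\<^sub>R e)" for x t
    proof -
      have "((\<lambda>s. F ((x + t *\<^sub>R e) + s *\<^sub>R e)) has_real_derivative D (x + t *\<^sub>R e)) (at 0)"
        using dF .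
      moreover have "(\<lambda>s. F ((x + t *\<^sub>R e) + s *\<^sub>R e)) = (\<lambda>s. (\<lambda>t. F (x + t *\<^sub>R e)) (s + t))"
        by (simp add: scaleR_add_left ac_simps)
      ultimately show ?thesis using DERIV_shift[of "\<lambda>t. F (x + t *\<^sub>R e)" _ 0 t] by simp
    qed
    have QD: "\<bar>Q x - D x\<bar> \<le> \<eta>" for x
    proof -
      have "\<exists>z. 0 < z \<and> z < h \<and> F (x + h *\<^sub>R e) - F (x + 0 *\<^sub>R e) = (h - 0) * D (x + z *\<^sub>R e)"
        by (rule MVT2) (use h derx in auto)
      then obtain z where z: "0 < z" "z < h" "F (x + h *\<^sub>R e) - F (x + 0 *\<^sub>R e) = (h - 0) * D (x + z *\<^sub>R e)"
        by blast
      have "Q x = D (x + z *\<^sub>R e)" using z h unfolding Q_def c_def by (simp add: field_simps)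
      moreover have "\<bar>D (x + z *\<^sub>R e) - D x\<bar> < \<eta>" using \<delta>(2)[of z x] z h by auto
      ultimately show ?thesis by simp
    qed
    have supp: "x \<in> cball 0 \<rho>" if "F (x + c) \<noteq> 0 \<or> F x \<noteq> 0" for x
    proof (rule ccontr)
      assume "x \<notin> cball 0 \<rho>"
      then have nx: "norm x > r + norm e" unfolding \<rho>_def by simp
      have "norm c \<le> norm e" using h unfolding c_def by (simp add: mult_left_le_one_le)
      moreover have "norm x \<le> norm (x + c) + norm c"
        using norm_triangle_ineq[of "x + c" "- c"] by simp
      ultimately have "norm (x + c) > r" using nx by linarith
      moreover have "norm x > r" using nx ne0 by linarith
      ultimately have "F (x + c) = 0" "F x = 0" using outK FK by auto
      then show False using that by simp
    qed
    have Kb2: "cball 0 \<rho> \<subseteq> cbox (-a) a"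
    proof -
      have "cball 0 \<rho> \<subseteq> S" unfolding S_def by (intro subset_cball) simp
      then show ?thesis using box by blast
    qed
    have cFc: "continuous_on UNIV (\<lambda>x. F (x + c))"
      by (intro continuous_on_compose2[OF cF] continuous_intros) auto
    have cQ: "continuous_on UNIV Q" unfolding Q_def[abs_def]
      using cFc cF h by (intro continuous_intros) auto
    have Q0: "Q x = 0" if "x \<notin> cball 0 \<rho>" for x using supp that unfolding Q_def by force
    have D0: "D x = 0" if "x \<notin> cball 0 \<rho>" for x
    proof -
      from that have "norm x > \<rho>" by simp
      then have "norm x > r" using ne0 unfolding \<rho>_def by linarith
      then show ?thesis using DK outK by simp
    qed
    have F0: "F x = 0" if "x \<notin> cball 0 \<rho>" for x using supp that by blast
    have Fc0: "F (x + c) = 0" if "x \<notin> cball 0 \<rho>" for x using supp that by blast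
    have "((\<lambda>x. F (x + c)) has_integral integral (cbox (-a) a) (\<lambda>x. F (x + c))) UNIV"
      using cs_int[OF cFc compact_cball Fc0 Kb2] .
    moreover have "integral (cbox (-a) a) (\<lambda>x. F (x + c)) = integral (cbox (-a + c) (a + c)) F"
    proof -
      have "F integrable_on cbox (-a + c) (a + c)"
        by (intro integrable_continuous continuous_on_subset[OF cF]) auto
      then have "((F \<circ> (+) c) has_integral integral (cbox (-a + c) (a + c)) F) (cbox (-a) a)"
        using has_integral_shift_cbox_iff by blast
      then show ?thesis by (simp add: o_def add.commute integral_unique)
    qed
    moreover have "integral (cbox (-a + c) (a + c)) F = integral (cbox (-a) a) F"
    proof -
      have Kc: "K \<subseteq> cbox (-a + c) (a + c)"
      proof
        fix x assume "x \<in> K"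
        then have "norm x \<le> r" using r by auto
        moreover have "norm c \<le> norm e" using h unfolding c_def by (simp add: mult_left_le_one_le)
        ultimately have "norm (x - c) \<le> \<rho> + norm e"
          using norm_triangle_ineq4[of x c] ne0 unfolding \<rho>_def by linarith
        then have "x - c \<in> S" unfolding S_def by simp
        then have "x - c \<in> cbox (-a) a" using box by blast
        then have "c + (x - c) \<in> (\<lambda>x. c + x) ` cbox (-a) a" by blast
        then show "x \<in> cbox (-a + c) (a + c)"
          using cbox_translation[of c "-a" a] by (simp add: add.commute)
      qed
      have "(F has_integral integral (cbox (-a + c) (a + c)) F) UNIV"
        using cs_int[OF cF K FK Kc] by simp
      then have "integral (cbox (-a + c) (a + c)) F = integral UNIV F"
        by (simp add: integral_unique)
      also have "\<dots> = integral (cbox (-a) a) F"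
        using cs_int[OF cF K FK Kbox] by (simp add: integral_unique)
      finally show ?thesis .
    qed
    ultimately have IFc: "((\<lambda>x. F (x + c)) has_integral integral (cbox (-a) a) F) UNIV" by simp
    have IF: "(F has_integral integral (cbox (-a) a) F) UNIV" using cs_int[OF cF K FK Kbox] .
    have IQ: "(Q has_integral 0) UNIV"
    proof -
      have "((\<lambda>x. F (x + c) - F x) has_integral (integral (cbox (-a) a) F - integral (cbox (-a) a) F)) UNIV"
        using has_integral_diff[OF IFc IF] .
      then have "((\<lambda>x. (F (x + c) - F x) / h) has_integral 0) UNIV"
        using has_integral_divide[of _ 0 UNIV h] by simp
      then show ?thesis unfolding Q_def .
    qed
    have "((\<lambda>x. D x - Q x) has_integral integral UNIV D) UNIV"
      using has_integral_diff[OF intD IQ] intD by (simp add: integral_unique)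
    then have "((\<lambda>x. D x - Q x) has_integral integral UNIV D) (cbox (-a) a)"
    proof -
      have cDQ: "continuous_on UNIV (\<lambda>x. D x - Q x)" using cD cQ by (intro continuous_intros)
      have "((\<lambda>x. D x - Q x) has_integral integral (cbox (-a) a) (\<lambda>x. D x - Q x)) UNIV"
        using cs_int[OF cDQ compact_cball _ Kb2] Q0 D0 by auto
      have i1: "((\<lambda>x. D x - Q x) has_integral integral (cbox (-a) a) (\<lambda>x. D x - Q x)) (cbox (-a) a)"
        by (intro integrable_integral integrable_continuous continuous_on_subset[OF cDQ]) auto
      have "integral (cbox (-a) a) (\<lambda>x. D x - Q x) = integral UNIV D"
        using has_integral_unique[OF \<open>((\<lambda>x. D x - Q x) has_integral integral (cbox (-a) a) (\<lambda>x. D x - Q x)) UNIV\<close>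
           \<open>((\<lambda>x. D x - Q x) has_integral integral UNIV D) UNIV\<close>] .
      then show ?thesis using i1 by simp
    qed
    then have "norm (integral UNIV D) \<le> \<eta> * Henstock_Kurzweil_Integration.content (cbox (-a) a)"
      using QD \<eta>0 by (intro has_integral_bound[where f="\<lambda>x. D x - Q x"]) (auto simp: abs_minus_commute)
    then show ?thesis by simp
  qed
  show ?thesis
  proof (rule ccontr)
    assume ne: "integral UNIV D \<noteq> 0"
    define C where "C = Henstock_Kurzweil_Integration.content (cbox (-a) a)"
    have C0: "C \<ge> 0" unfolding C_def by simp
    define \<eta> where "\<eta> = \<bar>integral UNIV D\<bar> / (C + 1)"
    have "\<eta> > 0" using ne C0 unfolding \<eta>_def by auto
    then have "\<bar>integral UNIV D\<bar> \<le> \<eta> * C" using bound unfolding C_def by blast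
    also have "\<dots> < \<bar>integral UNIV D\<bar>" unfolding \<eta>_def using ne C0
      by (simp add: field_simps)
    finally show False by simp
  qed
qed



lemma partial_local:
  fixes g h :: "real^'n \<Rightarrow> real"
  assumes "open S" "x \<in> S" "\<And>y. y \<in> S \<Longrightarrow> h y = g y" "(h has_derivative H) (at x)"
  shows "(g has_derivative H) (at x)" "partial i g x = H (axis i 1)"
proof -
  show g: "(g has_derivative H) (at x)"
    by (rule has_derivative_transform_within_open[OF assms(4) assms(1) assms(2)]) (use assms(3) in blast)
  have "H = frechet_derivative g (at x)" by (rule frechet_derivative_at[OF g])
  then show "partial i g x = H (axis i 1)" unfolding partial_def by simp
qed

lemma partial_zero:
  fixes g :: "real^'n \<Rightarrow> real"
  assumes "open S" "x \<in> S" "\<And>y. y \<in> S \<Longrightarrow> g y = 0"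
  shows "partial i g x = 0" "(g has_derivative (\<lambda>_. 0)) (at x)"
proof -
  have d: "((\<lambda>_. 0::real) has_derivative (\<lambda>_. 0)) (at x)" by (rule has_derivative_const)
  show "partial i g x = 0" using partial_local(2)[OF assms(1,2) _ d] assms(3) by simp
  show "(g has_derivative (\<lambda>_. 0)) (at x)" using partial_local(1)[OF assms(1,2) _ d] assms(3) by simp
qed

lemma reflect_invol[simp]: "reflect k (reflect k x) = x"
  by (simp add: reflect_def vec_eq_iff)

lemma reflect_linear: "linear (reflect k)"
  by (rule linearI) (simp_all add: reflect_def vec_eq_iff)

lemma reflect_bl: "bounded_linear (reflect k)"
  using reflect_linear linear_conv_bounded_linear by blast

lemma reflect_deriv: "(reflect k has_derivative reflect k) (at x)"
  using reflect_bl by (rule bounded_linear_imp_has_derivative)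

lemma reflect_cont: "continuous_on S (reflect k)"
  using reflect_bl linear_continuous_on by blast

lemma reflect_axis: "reflect k (axis i 1) = (if i = k then -1 else 1) *\<^sub>R axis i (1::real)"
  by (simp add: reflect_def vec_eq_iff axis_def)

lemma comp_reflect_deriv:
  fixes g :: "real^'n \<Rightarrow> real"
  assumes "(g has_derivative G) (at (reflect k x))"
  shows "((\<lambda>y. g (reflect k y)) has_derivative (\<lambda>h. G (reflect k h))) (at x)"
  using has_derivative_compose[OF reflect_deriv assms] .

lemma lin_axis:
  fixes G :: "real^'n \<Rightarrow> real"
  assumes "(g has_derivative G) (at y)"
  shows "G (reflect k (axis i 1)) = (if i = k then -1 else 1) * G (axis i 1)"
proof -
  have "linear G" using has_derivative_bounded_linear[OF assms] bounded_linear.linear by blast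
  then show ?thesis unfolding reflect_axis by (simp add: linear_cmul)
qed

lemma test_fun_supp:
  fixes \<phi> :: "real^'n \<Rightarrow> real"
  assumes "test_fun \<Omega> \<phi>"
  shows "continuous_on UNIV \<phi>" "\<And>x. x \<notin> closure {x. \<phi> x \<noteq> 0} \<Longrightarrow> \<phi> x = 0"
    "\<And>x i. x \<notin> closure {x. \<phi> x \<noteq> 0} \<Longrightarrow> partial i \<phi> x = 0"
proof -
  have dif: "\<forall>x. \<phi> differentiable (at x)" using assms unfolding test_fun_def by blast
  show "continuous_on UNIV \<phi>"
  proof (rule continuous_at_imp_continuous_on, rule ballI)
    fix x show "isCont \<phi> x" using differentiable_imp_continuous_within[of \<phi> x UNIV] dif by simp
  qed
  show z: "\<phi> x = 0" if "x \<notin> closure {x. \<phi> x \<noteq> 0}" for x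
  proof (rule ccontr)
    assume "\<phi> x \<noteq> 0"
    then have "x \<in> {x. \<phi> x \<noteq> 0}" by simp
    then have "x \<in> closure {x. \<phi> x \<noteq> 0}" by (rule closure_subset[THEN subsetD])
    then show False using that by simp
  qed
  show "partial i \<phi> x = 0" if "x \<notin> closure {x. \<phi> x \<noteq> 0}" for x i
  proof (rule partial_zero(1)[of "- closure {x. \<phi> x \<noteq> 0}"])
    show "open (- closure {x. \<phi> x \<noteq> 0})" by (intro open_Compl closed_closure)
    show "x \<in> - closure {x. \<phi> x \<noteq> 0}" using that by simp
    show "\<phi> y = 0" if "y \<in> - closure {x. \<phi> x \<noteq> 0}" for y
      using that by (intro z) simp
  qed
qed

lemma test_fun_int:
  fixes \<phi> V :: "real^'n \<Rightarrow> real"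
  assumes "open \<Omega>" "test_fun \<Omega> \<phi>" "continuous_on \<Omega> V"
  shows "(\<lambda>x. \<Sum>i\<in>UNIV. (partial i \<phi> x)^2) integrable_on \<Omega>"
    "(\<lambda>x. V x * (\<phi> x)^2) integrable_on \<Omega>" "(\<lambda>x. (\<phi> x)^2) integrable_on \<Omega>"
proof -
  define K where "K = closure {x. \<phi> x \<noteq> 0}"
  have K: "compact K" "K \<subseteq> \<Omega>" "closed K" using assms(2) unfolding test_fun_def K_def by auto
  note s = test_fun_supp[OF assms(2), folded K_def]
  have cp: "continuous_on UNIV (partial i \<phi>)" for i using assms(2) unfolding test_fun_def by blast
  have c1: "continuous_on UNIV (\<lambda>x. \<Sum>i\<in>UNIV. (partial i \<phi> x)^2)"
    by (intro continuous_intros cp)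
  show "(\<lambda>x. \<Sum>i\<in>UNIV. (partial i \<phi> x)^2) integrable_on \<Omega>"
    by (rule cs_int_on(1)[OF c1 K(1) _ K(2)]) (simp add: s(3))
  have c3: "continuous_on UNIV (\<lambda>x. (\<phi> x)^2)" by (intro continuous_intros s(1))
  show "(\<lambda>x. (\<phi> x)^2) integrable_on \<Omega>"
    by (rule cs_int_on(1)[OF c3 K(1) _ K(2)]) (simp add: s(2))
  have "continuous_on \<Omega> (\<lambda>x. V x * (\<phi> x)^2)"
    by (intro continuous_intros assms(3) continuous_on_subset[OF s(1)]) simp
  then have c2: "continuous_on UNIV (\<lambda>x. V x * (\<phi> x)^2)"
    by (rule cs_cont[OF assms(1) K(3) K(2)]) (simp add: s(2))
  show "(\<lambda>x. V x * (\<phi> x)^2) integrable_on \<Omega>"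
    by (rule cs_int_on(1)[OF c2 K(1) _ K(2)]) (simp add: s(2))
qed

lemma rayleigh_lower:
  fixes \<phi> V :: "real^'n \<Rightarrow> real"
  assumes "open \<Omega>" "test_fun \<Omega> \<phi>" "continuous_on \<Omega> V" "\<And>x. x \<in> \<Omega> \<Longrightarrow> V x \<le> C" "C \<ge> 0"
  shows "rayleigh \<Omega> V \<phi> \<ge> -C"
proof -
  note I = test_fun_int[OF assms(1-3)]
  define A where "A = integral \<Omega> (\<lambda>x. \<Sum>i\<in>UNIV. (partial i \<phi> x)^2)"
  define B where "B = integral \<Omega> (\<lambda>x. V x * (\<phi> x)^2)"
  define D where "D = integral \<Omega> (\<lambda>x. (\<phi> x)^2)"
  have A: "A \<ge> 0" unfolding A_def by (rule integral_nonneg[OF I(1)]) (simp add: sum_nonneg)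
  have D: "D \<ge> 0" unfolding D_def by (rule integral_nonneg[OF I(3)]) simp
  have "B \<le> integral \<Omega> (\<lambda>x. C * (\<phi> x)^2)" unfolding B_def
  proof (rule integral_le[OF I(2)])
    show "(\<lambda>x. C * (\<phi> x)\<^sup>2) integrable_on \<Omega>" using integrable_on_cmult_left[OF I(3)] by simp
    show "V x * (\<phi> x)\<^sup>2 \<le> C * (\<phi> x)\<^sup>2" if "x \<in> \<Omega>" for x
      using assms(4)[OF that] by (intro mult_right_mono) auto
  qed
  also have "\<dots> = C * D" unfolding D_def by simp
  finally have B: "B \<le> C * D" .
  have r: "rayleigh \<Omega> V \<phi> = (A - B) / D" unfolding rayleigh_def A_def B_def D_def ..
  show ?thesis
  proof (cases "D = 0")
    case True then show ?thesis using r assms(5) by simp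
  next
    case False
    then have "D > 0" using D by simp
    moreover have "-C * D \<le> A - B" using A B by simp
    ultimately show ?thesis unfolding r by (simp add: pos_le_divide_eq)
  qed
qed



lemma integral_pos_cont:
  fixes g :: "real^'n \<Rightarrow> real"
  assumes "continuous_on UNIV g" "\<And>x. g x \<ge> 0" "g integrable_on UNIV" "g x0 > 0"
  shows "integral UNIV g > 0"
proof -
  have "isCont g x0" using assms(1) by (simp add: continuous_on_eq_continuous_at)
  then have "\<forall>\<^sub>F y in at x0. g y > g x0 / 2"
    using assms(4) by (intro order_tendstoD(1)) (auto simp: isCont_def)
  then obtain d where d: "d > 0" "\<And>y. y \<noteq> x0 \<Longrightarrow> dist y x0 < d \<Longrightarrow> g y > g x0 / 2"
    unfolding eventually_at by blast
  have gb: "g y > g x0 / 2" if "y \<in> ball x0 d" for y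
  proof (cases "y = x0")
    case True then show ?thesis using assms(4) by simp
  next
    case False then show ?thesis using d that by (simp add: dist_commute)
  qed
  obtain a b where ab: "cbox a b \<subseteq> ball x0 d" "x0 \<in> box a b" "\<forall>i\<in>Basis. a \<bullet> i < b \<bullet> i"
    using open_contains_cbox[of "ball x0 d" x0] d(1) by auto
  have cpos: "Henstock_Kurzweil_Integration.content (cbox a b) > 0"
    using ab(3) by (rule content_pos_lt)
  have ig: "g integrable_on cbox a b"
    by (rule integrable_continuous, rule continuous_on_subset[OF assms(1)]) simp
  have "integral (cbox a b) (\<lambda>_. g x0 / 2) \<le> integral (cbox a b) g"
  proof (rule integral_le)
    show "(\<lambda>_. g x0 / 2) integrable_on cbox a b" by (rule integrable_const)
    show "g x0 / 2 \<le> g x" if "x \<in> cbox a b" for x using gb ab(1) that by (intro less_imp_le) blast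
  qed (rule ig)
  moreover have "integral (cbox a b) (\<lambda>_. g x0 / 2) = Henstock_Kurzweil_Integration.content (cbox a b) * (g x0 / 2)"
    by simp
  moreover have "integral (cbox a b) g \<le> integral UNIV g"
    by (rule integral_subset_le[OF _ ig assms(3)]) (simp_all add: assms(2))
  moreover have "Henstock_Kurzweil_Integration.content (cbox a b) * (g x0 / 2) > 0"
    using cpos assms(4) by simp
  ultimately show ?thesis by linarith
qed

lemma line_deriv:
  fixes F :: "real^'n \<Rightarrow> real"
  assumes "(F has_derivative FD) (at x)"
  shows "((\<lambda>t. F (x + t *\<^sub>R e)) has_real_derivative FD e) (at 0)"
proof -
  have l: "((\<lambda>t. x + t *\<^sub>R e) has_derivative (\<lambda>t. t *\<^sub>R e)) (at (0::real))"
    by (intro derivative_eq_intros) auto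
  have F0: "(F has_derivative FD) (at (x + (0::real) *\<^sub>R e))" using assms by simp
  have "((\<lambda>t. F (x + t *\<^sub>R e)) has_derivative (\<lambda>t. FD (t *\<^sub>R e))) (at 0)"
    using has_derivative_compose[OF l F0] .
  moreover have "(\<lambda>t. FD (t *\<^sub>R e)) = (\<lambda>t. FD e * t)"
  proof
    fix t
    have "linear FD" using has_derivative_bounded_linear[OF assms] bounded_linear.linear by blast
    then show "FD (t *\<^sub>R e) = FD e * t" by (simp add: linear_cmul)
  qed
  ultimately show ?thesis unfolding has_field_derivative_def by simp
qed

locale setting =
  fixes \<Omega> :: "(real^'n::finite) set" and k :: 'n and f f' :: "real \<Rightarrow> real" and u :: "real^'n \<Rightarrow> real"
  assumes op: "open \<Omega>" and bd: "bounded \<Omega>" and sym: "simple_rot_sym k \<Omega>"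
    and fder: "\<And>t. (f has_real_derivative f' t) (at t)" and f'c: "continuous_on UNIV f'"
    and cvx: "convex_on UNIV f" and C2: "C2_on \<Omega> u" and uc: "continuous_on (closure \<Omega>) u"
    and pde: "\<And>x. x \<in> \<Omega> \<Longrightarrow> - laplacian u x = f (u x)"
    and bc: "\<And>x. x \<in> frontier \<Omega> \<Longrightarrow> u x = 0"
    and stab: "stable \<Omega> f' u"
begin

lemma R_in: "x \<in> \<Omega> \<Longrightarrow> reflect k x \<in> \<Omega>"
  using sym unfolding simple_rot_sym_def by blast

lemma R_img: "reflect k ` \<Omega> \<subseteq> \<Omega>" using R_in by blast

lemma R_cl: assumes "x \<in> closure \<Omega>" shows "reflect k x \<in> closure \<Omega>"
proof -
  have "reflect k ` closure \<Omega> \<subseteq> closure \<Omega>"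
    by (rule image_closure_subset[OF reflect_cont closed_closure])
       (use R_img closure_subset in blast)
  then show ?thesis using assms by blast
qed

lemma fr_eq: "frontier \<Omega> = closure \<Omega> - \<Omega>"
  unfolding frontier_def using interior_open[OF op] by simp

lemma R_fr: assumes "x \<in> frontier \<Omega>" shows "reflect k x \<in> frontier \<Omega>"
proof -
  have x: "x \<in> closure \<Omega>" "x \<notin> \<Omega>" using assms fr_eq by auto
  have "reflect k x \<notin> \<Omega>"
  proof
    assume "reflect k x \<in> \<Omega>"
    then have "reflect k (reflect k x) \<in> \<Omega>" by (rule R_in)
    then show False using x by simp
  qed
  then show ?thesis using R_cl[OF x(1)] fr_eq by simp
qed

definition v where "v x = u x - u (reflect k x)"

lemma v_cont: "continuous_on (closure \<Omega>) v"
proof -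
  have "continuous_on (closure \<Omega>) (\<lambda>x. u (reflect k x))"
    by (rule continuous_on_compose2[OF uc reflect_cont]) (use R_cl in blast)
  then show ?thesis unfolding v_def[abs_def] using uc by (intro continuous_intros)
qed

lemma v_fr: "x \<in> frontier \<Omega> \<Longrightarrow> v x = 0"
  unfolding v_def using bc R_fr by simp

lemma cl_compact: "compact (closure \<Omega>)" using bd by simp

lemma v_bound: obtains M where "M \<ge> 0" "\<And>x. x \<in> closure \<Omega> \<Longrightarrow> \<bar>v x\<bar> \<le> M"
proof -
  have "bounded (v ` closure \<Omega>)" by (rule compact_imp_bounded[OF compact_continuous_image[OF v_cont cl_compact]])
  then obtain b where "b > 0" "\<forall>y\<in>v ` closure \<Omega>. norm y \<le> b"
    unfolding bounded_pos by blast
  then show ?thesis using that[of b] by auto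
qed

lemma V_cont_cl: "continuous_on (closure \<Omega>) (\<lambda>x. f' (u x))"
  by (rule continuous_on_compose2[OF f'c uc]) simp

lemma V_cont: "continuous_on \<Omega> (\<lambda>x. f' (u x))"
  by (rule continuous_on_subset[OF V_cont_cl closure_subset])

lemma V_bound: obtains C where "C \<ge> 0" "\<And>x. x \<in> closure \<Omega> \<Longrightarrow> \<bar>f' (u x)\<bar> \<le> C"
proof -
  have "bounded ((\<lambda>x. f' (u x)) ` closure \<Omega>)" by (rule compact_imp_bounded[OF compact_continuous_image[OF V_cont_cl cl_compact]])
  then obtain b where "b > 0" "\<forall>y\<in>(\<lambda>x. f' (u x)) ` closure \<Omega>. norm y \<le> b"
    unfolding bounded_pos by blast
  then show ?thesis using that[of b] by simp
qed

lemma cvx_ineq: "f b - f a \<ge> f' a * (b - a)"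
proof (rule convex_on_imp_above_tangent[OF cvx])
  show "connected (UNIV::real set)" by simp
  show "a \<in> interior UNIV" by simp
  show "b \<in> UNIV" by simp
  show "(f has_real_derivative f' a) (at a within UNIV)" using fder by simp
qed

definition Du where "Du x = frechet_derivative u (at x)"

lemma du: "x \<in> \<Omega> \<Longrightarrow> (u has_derivative Du x) (at x)"
  using C2 unfolding C2_on_def Du_def by (simp add: frechet_derivative_works)

lemma pu: "partial i u x = Du x (axis i 1)" by (simp add: partial_def Du_def)

definition sg where "sg i = (if i = k then -1 else (1::real))"

definition dv where "dv i x = partial i u x - sg i * partial i u (reflect k x)"

lemma v_der: assumes "x \<in> \<Omega>"
  shows "(v has_derivative (\<lambda>h. Du x h - Du (reflect k x) (reflect k h))) (at x)"
proof -
  have "((\<lambda>y. u y - u (reflect k y)) has_derivative (\<lambda>h. Du x h - Du (reflect k x) (reflect k h))) (at x)"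
    by (rule has_derivative_diff[OF du[OF assms] comp_reflect_deriv[OF du[OF R_in[OF assms]]]])
  then show ?thesis unfolding v_def[abs_def] .
qed

lemma v_der_axis: assumes "x \<in> \<Omega>"
  shows "Du x (axis i 1) - Du (reflect k x) (reflect k (axis i 1)) = dv i x"
  using lin_axis[OF du[OF R_in[OF assms]]] unfolding dv_def pu sg_def by simp

definition P where "P i x = frechet_derivative (partial i u) (at x)"

lemma dpu: "x \<in> \<Omega> \<Longrightarrow> (partial i u has_derivative P i x) (at x)"
  using C2 unfolding C2_on_def P_def by (simp add: frechet_derivative_works)

definition pp where "pp i x = partial i (partial i u) x"

lemma pp_eq: "pp i x = P i x (axis i 1)" by (simp add: pp_def partial_def P_def)

lemma dv_der: assumes "x \<in> \<Omega>"
  shows "(dv i has_derivative (\<lambda>h. P i x h - sg i * P i (reflect k x) (reflect k h))) (at x)"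
proof -
  have "((\<lambda>y. partial i u y - sg i * partial i u (reflect k y)) has_derivative
      (\<lambda>h. P i x h - sg i * P i (reflect k x) (reflect k h))) (at x)"
    by (intro has_derivative_diff has_derivative_mult_right dpu[OF assms]
        comp_reflect_deriv dpu[OF R_in[OF assms]])
  then show ?thesis unfolding dv_def[abs_def] .
qed

lemma dv_der_axis: assumes "x \<in> \<Omega>"
  shows "P i x (axis i 1) - sg i * P i (reflect k x) (reflect k (axis i 1)) = pp i x - pp i (reflect k x)"
  using lin_axis[OF dpu[OF R_in[OF assms]]] by (simp add: pp_eq sg_def)

lemma lap: assumes "x \<in> \<Omega>"
  shows "(\<Sum>i\<in>UNIV. pp i x - pp i (reflect k x)) = f (u (reflect k x)) - f (u x)"
  using pde[OF assms] pde[OF R_in[OF assms]] unfolding laplacian_def pp_def by (simp add: sum_subtractf)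

lemma comp_R_cont: "continuous_on \<Omega> g \<Longrightarrow> continuous_on \<Omega> (\<lambda>x. g (reflect k x))"
  by (rule continuous_on_compose2[OF _ reflect_cont R_img])

lemma dv_cont: "continuous_on \<Omega> (dv i)"
proof -
  have c: "continuous_on \<Omega> (partial i u)" using C2 unfolding C2_on_def by blast
  show ?thesis unfolding dv_def[abs_def] by (intro continuous_intros c comp_R_cont)
qed

lemma pp_cont: "continuous_on \<Omega> (pp i)"
  using C2 unfolding C2_on_def pp_def[abs_def] by blast

lemma v_cont_O: "continuous_on \<Omega> v"
  by (rule continuous_on_subset[OF v_cont closure_subset])

definition Ks where "Ks \<delta> = {x \<in> closure \<Omega>. \<delta> \<le> v x}"

lemma Ks_closed: "closed (Ks \<delta>)"
proof -
  have "closed (closure \<Omega> \<inter> v -` {\<delta>..})"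
    by (rule continuous_closed_preimage[OF v_cont closed_closure closed_atLeast])
  moreover have "closure \<Omega> \<inter> v -` {\<delta>..} = Ks \<delta>" unfolding Ks_def by auto
  ultimately show ?thesis by simp
qed

lemma Ks_bounded: "bounded (Ks \<delta>)"
  by (rule bounded_subset[OF bounded_closure[OF bd]]) (auto simp: Ks_def)

lemma Ks_compact: "compact (Ks \<delta>)"
  using Ks_closed Ks_bounded compact_eq_bounded_closed by blast

lemma Ks_sub: assumes "\<delta> > 0" shows "Ks \<delta> \<subseteq> \<Omega>"
proof
  fix x assume x: "x \<in> Ks \<delta>"
  show "x \<in> \<Omega>"
  proof (rule ccontr)
    assume "x \<notin> \<Omega>"
    then have "x \<in> frontier \<Omega>" using x fr_eq unfolding Ks_def by blast
    then have "v x = 0" by (rule v_fr)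
    then show False using x assms unfolding Ks_def by simp
  qed
qed

lemma notKs: assumes "x \<in> \<Omega>" "x \<notin> Ks \<delta>" shows "v x < \<delta>"
proof -
  have "x \<in> closure \<Omega>" using assms(1) closure_subset by blast
  then show ?thesis using assms(2) unfolding Ks_def by auto
qed

lemma Ks_open_compl: "open (- Ks \<delta>)" using Ks_closed by (simp add: open_Compl)

definition psi where "psi e x = (if x \<in> \<Omega> then gg e (v x) else 0)"
definition phi where "phi e x = (if x \<in> \<Omega> then GG e (v x) else 0)"

lemma psi_out: assumes "x \<notin> Ks e" shows "psi e x = 0"
proof (cases "x \<in> \<Omega>")
  case True then show ?thesis using notKs[OF True assms] by (simp add: psi_def gg_zero)
qed (simp add: psi_def)

lemma phi_out: assumes "x \<notin> Ks e" shows "phi e x = 0"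
proof (cases "x \<in> \<Omega>")
  case True then show ?thesis using notKs[OF True assms] by (simp add: phi_def GG_zero)
qed (simp add: phi_def)

lemma gg_has_der: "e > 0 \<Longrightarrow> (gg e has_derivative (\<lambda>t. gd e s * t)) (at s)"
  using gg_deriv[of e s] unfolding has_field_derivative_def by simp

lemma GG_has_der: "e > 0 \<Longrightarrow> (GG e has_derivative (\<lambda>t. (gd e s)^2 * t)) (at s)"
  using GG_deriv[of e s] unfolding has_field_derivative_def by simp

lemma psi_der_in: assumes "e > 0" "x \<in> \<Omega>"
  shows "(psi e has_derivative (\<lambda>h. gd e (v x) * (Du x h - Du (reflect k x) (reflect k h)))) (at x)"
    "partial i (psi e) x = gd e (v x) * dv i x"
proof -
  have d: "((\<lambda>y. gg e (v y)) has_derivative (\<lambda>h. gd e (v x) * (Du x h - Du (reflect k x) (reflect k h)))) (at x)"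
    by (rule has_derivative_compose[OF v_der[OF assms(2)] gg_has_der[OF assms(1)]])
  have eq: "\<And>y. y \<in> \<Omega> \<Longrightarrow> gg e (v y) = psi e y" by (simp add: psi_def)
  show "(psi e has_derivative (\<lambda>h. gd e (v x) * (Du x h - Du (reflect k x) (reflect k h)))) (at x)"
    by (rule partial_local(1)[OF op assms(2) eq d])
  show "partial i (psi e) x = gd e (v x) * dv i x"
    using partial_local(2)[OF op assms(2) eq d] v_der_axis[OF assms(2)] by simp
qed

lemma psi_der_out: assumes "x \<notin> Ks e"
  shows "partial i (psi e) x = 0" "(psi e has_derivative (\<lambda>_. 0)) (at x)"
proof -
  have "\<And>y. y \<in> - Ks e \<Longrightarrow> psi e y = 0" using psi_out by simp
  then show "partial i (psi e) x = 0" "(psi e has_derivative (\<lambda>_. 0)) (at x)"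
    using partial_zero[OF Ks_open_compl, of x] assms by auto
qed

lemma partial_psi: assumes "e > 0"
  shows "partial i (psi e) x = (if x \<in> \<Omega> then gd e (v x) * dv i x else 0)"
proof (cases "x \<in> \<Omega>")
  case True then show ?thesis using psi_der_in(2)[OF assms True] by simp
next
  case False
  then have "x \<notin> Ks e" using Ks_sub[OF assms] by blast
  then show ?thesis using psi_der_out(1) False by simp
qed

lemma psi_diff: assumes "e > 0" shows "psi e differentiable (at x)"
proof (cases "x \<in> \<Omega>")
  case True show ?thesis by (rule differentiableI[OF psi_der_in(1)[OF assms True]])
next
  case False
  then have "x \<notin> Ks e" using Ks_sub[OF assms] by blast
  show ?thesis by (rule differentiableI[OF psi_der_out(2)[OF \<open>x \<notin> Ks e\<close>]])
qed

lemma gd_v_cont: "e > 0 \<Longrightarrow> continuous_on \<Omega> (\<lambda>x. gd e (v x))"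
  by (rule continuous_on_compose2[OF gd_cont v_cont_O]) auto

lemma GG_cont: "e > 0 \<Longrightarrow> continuous_on UNIV (GG e)"
  by (rule continuous_at_imp_continuous_on, rule ballI, rule DERIV_isCont[OF GG_deriv])

lemma gg_cont: "e > 0 \<Longrightarrow> continuous_on UNIV (gg e)"
  by (rule continuous_at_imp_continuous_on, rule ballI, rule DERIV_isCont[OF gg_deriv])

lemma GG_v_cont: "e > 0 \<Longrightarrow> continuous_on \<Omega> (\<lambda>x. GG e (v x))"
  by (rule continuous_on_compose2[OF GG_cont v_cont_O]) auto

lemma gg_v_cont: "e > 0 \<Longrightarrow> continuous_on \<Omega> (\<lambda>x. gg e (v x))"
  by (rule continuous_on_compose2[OF gg_cont v_cont_O]) auto

lemma extend_cont:
  fixes g :: "real^'n \<Rightarrow> real"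
  assumes "e > 0" "continuous_on \<Omega> g" "\<And>x. x \<in> \<Omega> \<Longrightarrow> x \<notin> Ks e \<Longrightarrow> g x = 0"
  shows "continuous_on UNIV (\<lambda>x. if x \<in> \<Omega> then g x else 0)"
proof (rule cs_cont[OF op Ks_closed Ks_sub[OF assms(1)]])
  show "continuous_on \<Omega> (\<lambda>x. if x \<in> \<Omega> then g x else 0)"
    using assms(2) by (rule continuous_on_eq) simp
  show "(if x \<in> \<Omega> then g x else 0) = 0" if "x \<notin> Ks e" for x
    using assms(3) that by simp
qed

lemma partial_psi_cont: assumes "e > 0" shows "continuous_on UNIV (partial i (psi e))"
proof -
  have "continuous_on UNIV (\<lambda>x. if x \<in> \<Omega> then gd e (v x) * dv i x else 0)"
  proof (rule extend_cont[OF assms])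
    show "continuous_on \<Omega> (\<lambda>x. gd e (v x) * dv i x)"
      by (intro continuous_intros gd_v_cont[OF assms] dv_cont)
    show "gd e (v x) * dv i x = 0" if "x \<in> \<Omega>" "x \<notin> Ks e" for x
      using notKs[OF that] by (simp add: gd_zero)
  qed
  moreover have "partial i (psi e) = (\<lambda>x. if x \<in> \<Omega> then gd e (v x) * dv i x else 0)"
    using partial_psi[OF assms] by (simp add: fun_eq_iff)
  ultimately show ?thesis by simp
qed

lemma psi_nz_sub: "{x. psi e x \<noteq> 0} \<subseteq> Ks e" using psi_out by blast

lemma psi_supp: "closure {x. psi e x \<noteq> 0} \<subseteq> Ks e"
  by (rule closure_minimal[OF psi_nz_sub Ks_closed])

lemma psi_test: assumes "e > 0" shows "test_fun \<Omega> (psi e)"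
  unfolding test_fun_def
proof (intro conjI allI)
  show "psi e differentiable (at x)" for x by (rule psi_diff[OF assms])
  show "continuous_on UNIV (partial i (psi e))" for i by (rule partial_psi_cont[OF assms])
  have "bounded {x. psi e x \<noteq> 0}" by (rule bounded_subset[OF Ks_bounded psi_nz_sub])
  then show "compact (closure {x. psi e x \<noteq> 0})" by simp
  show "closure {x. psi e x \<noteq> 0} \<subseteq> \<Omega>" using psi_supp Ks_sub[OF assms] by blast
qed

definition Fi where "Fi e i x = (if x \<in> \<Omega> then GG e (v x) * dv i x else 0)"
definition Dd where "Dd e i x = (if x \<in> \<Omega> then GG e (v x) * (pp i x - pp i (reflect k x))
   + (gd e (v x))^2 * dv i x * dv i x else 0)"

lemma Fi_out: assumes "x \<notin> Ks e" shows "Fi e i x = 0"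
proof (cases "x \<in> \<Omega>")
  case True then show ?thesis using notKs[OF True assms] by (simp add: Fi_def GG_zero)
qed (simp add: Fi_def)

lemma Dd_out: assumes "x \<notin> Ks e" shows "Dd e i x = 0"
proof (cases "x \<in> \<Omega>")
  case True then show ?thesis using notKs[OF True assms] by (simp add: Dd_def GG_zero gd_zero)
qed (simp add: Dd_def)

lemma Fi_line: assumes "e > 0"
  shows "((\<lambda>t. Fi e i (x + t *\<^sub>R axis i 1)) has_real_derivative Dd e i x) (at 0)"
proof (cases "x \<in> \<Omega>")
  case True
  have d1: "((\<lambda>y. GG e (v y)) has_derivative (\<lambda>h. (gd e (v x))^2 * (Du x h - Du (reflect k x) (reflect k h)))) (at x)"
    by (rule has_derivative_compose[OF v_der[OF True] GG_has_der[OF assms]])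
  have d: "((\<lambda>y. GG e (v y) * dv i y) has_derivative
     (\<lambda>h. GG e (v x) * (P i x h - sg i * P i (reflect k x) (reflect k h))
       + (gd e (v x))^2 * (Du x h - Du (reflect k x) (reflect k h)) * dv i x)) (at x)"
    by (rule has_derivative_mult[OF d1 dv_der[OF True]])
  have eq: "\<And>y. y \<in> \<Omega> \<Longrightarrow> GG e (v y) * dv i y = Fi e i y" by (simp add: Fi_def)
  have "(Fi e i has_derivative
     (\<lambda>h. GG e (v x) * (P i x h - sg i * P i (reflect k x) (reflect k h))
       + (gd e (v x))^2 * (Du x h - Du (reflect k x) (reflect k h)) * dv i x)) (at x)"
    by (rule partial_local(1)[OF op True eq d])
  from line_deriv[OF this, of "axis i 1"] show ?thesis
    using True v_der_axis[OF True, of i] dv_der_axis[OF True, of i] by (simp add: Dd_def)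
next
  case False
  then have nK: "x \<notin> Ks e" using Ks_sub[OF assms] by blast
  have "\<And>y. y \<in> - Ks e \<Longrightarrow> Fi e i y = 0" using Fi_out by simp
  then have "(Fi e i has_derivative (\<lambda>_. 0)) (at x)"
    using partial_zero(2)[OF Ks_open_compl, of x] nK by auto
  from line_deriv[OF this, of "axis i 1"] show ?thesis using Dd_out[OF nK] by simp
qed

lemma Fi_cont: assumes "e > 0" shows "continuous_on UNIV (Fi e i)"
proof -
  have "continuous_on UNIV (\<lambda>x. if x \<in> \<Omega> then GG e (v x) * dv i x else 0)"
  proof (rule extend_cont[OF assms])
    show "continuous_on \<Omega> (\<lambda>x. GG e (v x) * dv i x)"
      by (intro continuous_intros GG_v_cont[OF assms] dv_cont)
    show "GG e (v x) * dv i x = 0" if "x \<in> \<Omega>" "x \<notin> Ks e" for x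
      using notKs[OF that] by (simp add: GG_zero)
  qed
  then show ?thesis unfolding Fi_def[abs_def] .
qed

lemma Dd_cont: assumes "e > 0" shows "continuous_on UNIV (Dd e i)"
proof -
  have "continuous_on UNIV (\<lambda>x. if x \<in> \<Omega> then GG e (v x) * (pp i x - pp i (reflect k x))
   + (gd e (v x))^2 * dv i x * dv i x else 0)"
  proof (rule extend_cont[OF assms])
    show "continuous_on \<Omega> (\<lambda>x. GG e (v x) * (pp i x - pp i (reflect k x))
   + (gd e (v x))^2 * dv i x * dv i x)"
      by (intro continuous_intros GG_v_cont[OF assms] gd_v_cont[OF assms] dv_cont pp_cont comp_R_cont)
    show "GG e (v x) * (pp i x - pp i (reflect k x)) + (gd e (v x))^2 * dv i x * dv i x = 0"
      if "x \<in> \<Omega>" "x \<notin> Ks e" for x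
      using notKs[OF that] by (simp add: GG_zero gd_zero)
  qed
  then show ?thesis unfolding Dd_def[abs_def] .
qed

lemma Dd_int0: assumes "e > 0" shows "integral UNIV (Dd e i) = 0"
  by (rule div_zero[OF Fi_line[OF assms] Dd_cont[OF assms] Fi_cont[OF assms] Ks_compact Fi_out Dd_out])

lemma Dd_integrable: assumes "e > 0" shows "Dd e i integrable_on UNIV"
  by (rule cs_int2[OF Dd_cont[OF assms] Ks_compact Dd_out])

definition Aint where "Aint e x = (\<Sum>i\<in>UNIV. (partial i (psi e) x)^2)"
definition W where "W e x = (if x \<in> \<Omega> then GG e (v x) * (f (u x) - f (u (reflect k x))) else 0)"

lemma sum_Dd: assumes "e > 0" shows "(\<Sum>i\<in>UNIV. Dd e i x) = Aint e x - W e x"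
proof (cases "x \<in> \<Omega>")
  case True
  have "(\<Sum>i\<in>UNIV. Dd e i x) = (\<Sum>i\<in>UNIV. GG e (v x) * (pp i x - pp i (reflect k x)))
      + (\<Sum>i\<in>UNIV. (gd e (v x))^2 * dv i x * dv i x)"
    using True by (simp add: Dd_def sum.distrib)
  also have "(\<Sum>i\<in>UNIV. GG e (v x) * (pp i x - pp i (reflect k x))) = GG e (v x) * (f (u (reflect k x)) - f (u x))"
    by (simp add: sum_distrib_left[symmetric] lap[OF True])
  also have "(\<Sum>i\<in>UNIV. (gd e (v x))^2 * dv i x * dv i x) = Aint e x"
    by (simp add: Aint_def partial_psi[OF assms] True power2_eq_square mult_ac)
  finally show ?thesis using True by (simp add: W_def algebra_simps)
next
  case False
  then show ?thesis by (simp add: Dd_def Aint_def W_def partial_psi[OF assms])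
qed

lemma f_cont: "continuous_on UNIV f"
  by (rule continuous_at_imp_continuous_on, rule ballI, rule DERIV_isCont[OF fder])

lemma u_cont_O: "continuous_on \<Omega> u"
  by (rule continuous_on_subset[OF uc closure_subset])

lemma fu_cont: "continuous_on \<Omega> (\<lambda>x. f (u x))"
  by (rule continuous_on_compose2[OF f_cont u_cont_O]) simp

lemma W_out: assumes "x \<notin> Ks e" shows "W e x = 0"
proof (cases "x \<in> \<Omega>")
  case True then show ?thesis using notKs[OF True assms] by (simp add: W_def GG_zero)
qed (simp add: W_def)

lemma W_cont: assumes "e > 0" shows "continuous_on UNIV (W e)"
proof -
  have "continuous_on UNIV (\<lambda>x. if x \<in> \<Omega> then GG e (v x) * (f (u x) - f (u (reflect k x))) else 0)"
  proof (rule extend_cont[OF assms])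
    show "continuous_on \<Omega> (\<lambda>x. GG e (v x) * (f (u x) - f (u (reflect k x))))"
      by (intro continuous_intros GG_v_cont[OF assms] fu_cont comp_R_cont[OF fu_cont])
    show "GG e (v x) * (f (u x) - f (u (reflect k x))) = 0" if "x \<in> \<Omega>" "x \<notin> Ks e" for x
      using notKs[OF that] by (simp add: GG_zero)
  qed
  then show ?thesis unfolding W_def[abs_def] .
qed

lemma Aint_cont: assumes "e > 0" shows "continuous_on UNIV (Aint e)"
  unfolding Aint_def[abs_def] by (intro continuous_intros partial_psi_cont[OF assms])

lemma Aint_out: assumes "x \<notin> Ks e" shows "Aint e x = 0"
  unfolding Aint_def using psi_der_out(1)[OF assms] by simp

lemma A_eq: assumes "e > 0" shows "integral \<Omega> (Aint e) = integral UNIV (W e)"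
proof -
  have iA: "Aint e integrable_on UNIV" by (rule cs_int2[OF Aint_cont[OF assms] Ks_compact Aint_out])
  have iW: "W e integrable_on UNIV" by (rule cs_int2[OF W_cont[OF assms] Ks_compact W_out])
  have "integral UNIV (\<lambda>x. \<Sum>i\<in>UNIV. Dd e i x) = (\<Sum>i\<in>UNIV. integral UNIV (Dd e i))"
    by (rule integral_sum) (simp_all add: Dd_integrable[OF assms])
  also have "\<dots> = 0" by (simp add: Dd_int0[OF assms])
  finally have "integral UNIV (\<lambda>x. Aint e x - W e x) = 0" by (simp add: sum_Dd[OF assms])
  then have "integral UNIV (Aint e) = integral UNIV (W e)"
    using integral_diff[OF iA iW] by simp
  moreover have "integral \<Omega> (Aint e) = integral UNIV (Aint e)"
    by (rule cs_int_on(2)[OF Aint_cont[OF assms] Ks_compact Aint_out Ks_sub[OF assms]])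
  ultimately show ?thesis by simp
qed

lemma psi_cont: assumes "e > 0" shows "continuous_on UNIV (psi e)"
proof (rule continuous_at_imp_continuous_on, rule ballI)
  fix x show "isCont (psi e) x"
    using differentiable_imp_continuous_within[OF psi_diff[OF assms, of x]] by simp
qed

definition Bf where "Bf e x = f' (u x) * (psi e x)^2"

lemma Bf_out: "x \<notin> Ks e \<Longrightarrow> Bf e x = 0" by (simp add: Bf_def psi_out)

lemma Bf_cont: assumes "e > 0" shows "continuous_on UNIV (Bf e)"
proof (rule cs_cont[OF op Ks_closed Ks_sub[OF assms]])
  show "continuous_on \<Omega> (Bf e)" unfolding Bf_def[abs_def]
    by (intro continuous_intros V_cont continuous_on_subset[OF psi_cont[OF assms]]) simp
  show "Bf e x = 0" if "x \<notin> Ks e" for x using that by (rule Bf_out)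
qed

definition Wb where "Wb e x = (if x \<in> \<Omega> then GG e (v x) * (f' (u x) * v x) else 0)"

lemma Wb_out: assumes "x \<notin> Ks e" shows "Wb e x = 0"
proof (cases "x \<in> \<Omega>")
  case True then show ?thesis using notKs[OF True assms] by (simp add: Wb_def GG_zero)
qed (simp add: Wb_def)

lemma Wb_cont: assumes "e > 0" shows "continuous_on UNIV (Wb e)"
proof -
  have "continuous_on UNIV (\<lambda>x. if x \<in> \<Omega> then GG e (v x) * (f' (u x) * v x) else 0)"
  proof (rule extend_cont[OF assms])
    show "continuous_on \<Omega> (\<lambda>x. GG e (v x) * (f' (u x) * v x))"
      by (intro continuous_intros GG_v_cont[OF assms] V_cont v_cont_O)
    show "GG e (v x) * (f' (u x) * v x) = 0" if "x \<in> \<Omega>" "x \<notin> Ks e" for x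
      using notKs[OF that] by (simp add: GG_zero)
  qed
  then show ?thesis unfolding Wb_def[abs_def] .
qed

lemma W_le_Wb: assumes "e > 0" shows "W e x \<le> Wb e x"
proof (cases "x \<in> \<Omega>")
  case True
  have c: "f (u (reflect k x)) - f (u x) \<ge> f' (u x) * (u (reflect k x) - u x)" by (rule cvx_ineq)
  have "f' (u x) * (u (reflect k x) - u x) = - (f' (u x) * v x)" by (simp add: v_def algebra_simps)
  then have "f (u x) - f (u (reflect k x)) \<le> f' (u x) * v x" using c by linarith
  then have "GG e (v x) * (f (u x) - f (u (reflect k x))) \<le> GG e (v x) * (f' (u x) * v x)"
    by (rule mult_left_mono) (rule GG_nonneg[OF assms])
  then show ?thesis using True by (simp add: W_def Wb_def)
qed (simp add: W_def Wb_def)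

lemma AB_bound:
  assumes e: "e > 0" and C: "C \<ge> 0" "\<And>x. x \<in> closure \<Omega> \<Longrightarrow> \<bar>f' (u x)\<bar> \<le> C"
    and M: "M \<ge> 0" "\<And>x. x \<in> closure \<Omega> \<Longrightarrow> \<bar>v x\<bar> \<le> M"
    and box: "closure \<Omega> \<subseteq> cbox (-a) a"
  shows "integral \<Omega> (Aint e) - integral \<Omega> (Bf e)
     \<le> C * (e * (e + 2*M)) * Henstock_Kurzweil_Integration.content (cbox (-a) a)"
proof -
  have iW: "W e integrable_on UNIV" by (rule cs_int2[OF W_cont[OF e] Ks_compact W_out])
  have iWb: "Wb e integrable_on UNIV" by (rule cs_int2[OF Wb_cont[OF e] Ks_compact Wb_out])
  have iB: "Bf e integrable_on UNIV" by (rule cs_int2[OF Bf_cont[OF e] Ks_compact Bf_out])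
  have "integral UNIV (W e) \<le> integral UNIV (Wb e)"
    by (rule integral_le[OF iW iWb]) (rule W_le_Wb[OF e])
  moreover have "integral \<Omega> (Bf e) = integral UNIV (Bf e)"
    by (rule cs_int_on(2)[OF Bf_cont[OF e] Ks_compact Bf_out Ks_sub[OF e]])
  moreover have "integral UNIV (\<lambda>x. Wb e x - Bf e x) = integral UNIV (Wb e) - integral UNIV (Bf e)"
    by (rule integral_diff[OF iWb iB])
  moreover have "integral UNIV (\<lambda>x. Wb e x - Bf e x)
     \<le> C * (e * (e + 2*M)) * Henstock_Kurzweil_Integration.content (cbox (-a) a)"
  proof -
    have cZ: "continuous_on UNIV (\<lambda>x. Wb e x - Bf e x)"
      by (intro continuous_intros Wb_cont[OF e] Bf_cont[OF e])
    have Ksb: "Ks e \<subseteq> cbox (-a) a" using box unfolding Ks_def by blast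
    have h1: "((\<lambda>x. Wb e x - Bf e x) has_integral integral (cbox (-a) a) (\<lambda>x. Wb e x - Bf e x)) UNIV"
      by (rule cs_int[OF cZ Ks_compact _ Ksb]) (simp add: Wb_out Bf_out)
    then have eqi: "integral UNIV (\<lambda>x. Wb e x - Bf e x) = integral (cbox (-a) a) (\<lambda>x. Wb e x - Bf e x)"
      by (rule integral_unique)
    have h2: "((\<lambda>x. Wb e x - Bf e x) has_integral integral (cbox (-a) a) (\<lambda>x. Wb e x - Bf e x)) (cbox (-a) a)"
      by (rule integrable_integral, rule integrable_continuous, rule continuous_on_subset[OF cZ]) simp
    have pw: "norm (Wb e x - Bf e x) \<le> C * (e * (e + 2*M))" for x
    proof (cases "x \<in> \<Omega>")
      case True
      have xc: "x \<in> closure \<Omega>" using True closure_subset by blast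
      have z: "Wb e x - Bf e x = f' (u x) * (v x * GG e (v x) - (gg e (v x))^2)"
        using True by (simp add: Wb_def Bf_def psi_def algebra_simps)
      have k0: "0 \<le> v x * GG e (v x) - (gg e (v x))^2" by (rule key_ineq(1)[OF e])
      have k1: "v x * GG e (v x) - (gg e (v x))^2 \<le> e * (e + 2 * \<bar>v x\<bar>)" by (rule key_ineq(2)[OF e])
      have "e * (e + 2 * \<bar>v x\<bar>) \<le> e * (e + 2 * M)" using M(2)[OF xc] e by simp
      then have k2: "v x * GG e (v x) - (gg e (v x))^2 \<le> e * (e + 2 * M)" using k1 by linarith
      have "norm (Wb e x - Bf e x) = \<bar>f' (u x)\<bar> * (v x * GG e (v x) - (gg e (v x))^2)"
        unfolding z using k0 by (simp add: abs_mult)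
      also have "\<dots> \<le> C * (e * (e + 2 * M))"
        using C(2)[OF xc] k0 k2 C(1) by (intro mult_mono) auto
      finally show ?thesis .
    next
      case False
      then show ?thesis using C(1) M(1) e by (simp add: Wb_def Bf_def psi_def)
    qed
    have "norm (integral (cbox (-a) a) (\<lambda>x. Wb e x - Bf e x))
        \<le> C * (e * (e + 2*M)) * Henstock_Kurzweil_Integration.content (cbox (-a) a)"
      by (rule has_integral_bound[OF _ h2]) (use C(1) M(1) e pw in auto)
    then show ?thesis unfolding eqi by simp
  qed
  ultimately show ?thesis using A_eq[OF e] by linarith
qed

lemma stab_ineq: assumes "e > 0" "\<exists>x. psi e x \<noteq> 0"
  shows "first_dirichlet_eigenvalue \<Omega> (\<lambda>x. f' (u x)) \<le> rayleigh \<Omega> (\<lambda>x. f' (u x)) (psi e)"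
proof -
  obtain C where C: "C \<ge> 0" "\<And>x. x \<in> closure \<Omega> \<Longrightarrow> \<bar>f' (u x)\<bar> \<le> C" using V_bound by blast
  have VC: "f' (u x) \<le> C" if "x \<in> \<Omega>" for x
  proof -
    have "x \<in> closure \<Omega>" using that closure_subset by blast
    then show ?thesis using C(2) by fastforce
  qed
  have bdd: "bdd_below {rayleigh \<Omega> (\<lambda>x. f' (u x)) \<phi> | \<phi>. test_fun \<Omega> \<phi> \<and> (\<exists>x. \<phi> x \<noteq> 0)}"
  proof (rule bdd_belowI)
    fix r assume "r \<in> {rayleigh \<Omega> (\<lambda>x. f' (u x)) \<phi> | \<phi>. test_fun \<Omega> \<phi> \<and> (\<exists>x. \<phi> x \<noteq> 0)}"
    then obtain \<phi> where "r = rayleigh \<Omega> (\<lambda>x. f' (u x)) \<phi>" "test_fun \<Omega> \<phi>" by blast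
    then show "-C \<le> r" using rayleigh_lower[OF op _ V_cont VC C(1)] by simp
  qed
  have mem: "rayleigh \<Omega> (\<lambda>x. f' (u x)) (psi e) \<in> {rayleigh \<Omega> (\<lambda>x. f' (u x)) \<phi> | \<phi>. test_fun \<Omega> \<phi> \<and> (\<exists>x. \<phi> x \<noteq> 0)}"
    using psi_test[OF assms(1)] assms(2) by blast
  show ?thesis unfolding first_dirichlet_eigenvalue_def by (rule cInf_lower[OF mem bdd])
qed

definition m0 where "m0 e0 x = (if x \<in> \<Omega> then (max 0 (v x - 2*e0))^2 else 0)"

lemma m0_out: assumes "x \<notin> Ks (2*e0)" shows "m0 e0 x = 0"
proof (cases "x \<in> \<Omega>")
  case True then show ?thesis using notKs[OF True assms] by (simp add: m0_def)
qed (simp add: m0_def)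

lemma m0_cont: assumes "e0 > 0" shows "continuous_on UNIV (m0 e0)"
proof -
  have p: "2 * e0 > 0" using assms by simp
  have "continuous_on UNIV (\<lambda>x. if x \<in> \<Omega> then (max 0 (v x - 2*e0))^2 else 0)"
  proof (rule extend_cont[OF p])
    show "continuous_on \<Omega> (\<lambda>x. (max 0 (v x - 2*e0))^2)"
      by (intro continuous_intros v_cont_O)
    show "(max 0 (v x - 2*e0))^2 = 0" if "x \<in> \<Omega>" "x \<notin> Ks (2*e0)" for x
      using notKs[OF that] by simp
  qed
  then show ?thesis unfolding m0_def[abs_def] .
qed

lemma half: "\<forall>x\<in>\<Omega>. u x \<le> u (reflect k x)"
proof (rule ccontr)
  assume "\<not> (\<forall>x\<in>\<Omega>. u x \<le> u (reflect k x))"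
  then obtain x0 where x0: "x0 \<in> \<Omega>" "v x0 > 0" unfolding v_def by force
  define l0 where "l0 = first_dirichlet_eigenvalue \<Omega> (\<lambda>x. f' (u x))"
  have l0: "l0 > 0" using stab unfolding stable_def l0_def by simp
  define e0 where "e0 = v x0 / 4"
  have e0: "e0 > 0" using x0 unfolding e0_def by simp
  obtain M where M: "M \<ge> 0" "\<And>x. x \<in> closure \<Omega> \<Longrightarrow> \<bar>v x\<bar> \<le> M" using v_bound by blast
  obtain C where C: "C \<ge> 0" "\<And>x. x \<in> closure \<Omega> \<Longrightarrow> \<bar>f' (u x)\<bar> \<le> C" using V_bound by blast
  obtain a where box: "closure \<Omega> \<subseteq> cbox (-a) a"
    using bounded_subset_cbox_symmetric[OF bounded_closure[OF bd]] by blast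
  define cnt where "cnt = Henstock_Kurzweil_Integration.content (cbox (-a) a)"
  have cnt: "cnt \<ge> 0" unfolding cnt_def by simp
  define m where "m = integral UNIV (m0 e0)"
  have im0: "m0 e0 integrable_on UNIV"
    by (rule cs_int2[OF m0_cont[OF e0] Ks_compact m0_out])
  have "m0 e0 x0 > 0" using x0 unfolding m0_def e0_def by simp
  then have m: "m > 0" unfolding m_def
    by (intro integral_pos_cont[OF m0_cont[OF e0] _ im0]) (simp_all add: m0_def)
  define T where "T = C * (1 + 2*M) * cnt + 1"
  have T: "T \<ge> 1" unfolding T_def using C(1) M(1) cnt by simp
  define e where "e = min e0 (min 1 (l0 * m / (2*T)))"
  have e: "e > 0" "e \<le> e0" "e \<le> 1" "e \<le> l0 * m / (2*T)"
    using e0 l0 m T unfolding e_def by auto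
  have g0: "gg e (v x0) \<ge> max 0 (v x0 - 2*e)" by (rule gg_lower[OF e(1)])
  have "v x0 - 2*e \<ge> v x0 / 2" using e(2) unfolding e0_def by simp
  then have "psi e x0 > 0" using g0 x0 unfolding psi_def by simp
  then have nz: "\<exists>x. psi e x \<noteq> 0" by (intro exI[of _ x0]) simp
  define Dn where "Dn = integral \<Omega> (\<lambda>x. (psi e x)^2)"
  have cps: "continuous_on UNIV (\<lambda>x. (psi e x)^2)" by (intro continuous_intros psi_cont[OF e(1)])
  have ps0: "(psi e x)^2 = 0" if "x \<notin> Ks e" for x using psi_out[OF that] by simp
  have Dn_eq: "Dn = integral UNIV (\<lambda>x. (psi e x)^2)"
    unfolding Dn_def by (rule cs_int_on(2)[OF cps Ks_compact ps0 Ks_sub[OF e(1)]])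
  have ips: "(\<lambda>x. (psi e x)^2) integrable_on UNIV" by (rule cs_int2[OF cps Ks_compact ps0])
  have "m \<le> Dn" unfolding m_def Dn_eq
  proof (rule integral_le[OF im0 ips])
    fix x
    show "m0 e0 x \<le> (psi e x)^2"
    proof (cases "x \<in> \<Omega>")
      case True
      have "max 0 (v x - 2*e0) \<le> gg e (v x)"
        using gg_lower[OF e(1), of "v x"] e(2) by linarith
      then have "(max 0 (v x - 2*e0))^2 \<le> (gg e (v x))^2" by (intro power_mono) auto
      then show ?thesis using True by (simp add: m0_def psi_def)
    qed (simp add: m0_def psi_def)
  qed
  then have Dn: "Dn > 0" "l0 * m \<le> l0 * Dn" using m l0 by (auto intro: mult_left_mono)
  have "l0 \<le> rayleigh \<Omega> (\<lambda>x. f' (u x)) (psi e)" unfolding l0_def by (rule stab_ineq[OF e(1) nz])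
  moreover have "rayleigh \<Omega> (\<lambda>x. f' (u x)) (psi e) = (integral \<Omega> (Aint e) - integral \<Omega> (Bf e)) / Dn"
    unfolding rayleigh_def Dn_def Aint_def[abs_def] Bf_def[abs_def] ..
  ultimately have "l0 \<le> (integral \<Omega> (Aint e) - integral \<Omega> (Bf e)) / Dn" by simp
  then have s1: "l0 * Dn \<le> integral \<Omega> (Aint e) - integral \<Omega> (Bf e)"
    using Dn(1) by (simp add: pos_le_divide_eq)
  have s2: "integral \<Omega> (Aint e) - integral \<Omega> (Bf e) \<le> C * (e * (e + 2*M)) * cnt"
    unfolding cnt_def by (rule AB_bound[OF e(1) C M box])
  have "C * (e * (e + 2*M)) * cnt \<le> C * (e * (1 + 2*M)) * cnt"
    using e C(1) M(1) cnt by (intro mult_right_mono mult_left_mono) auto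
  also have "\<dots> = e * (T - 1)" unfolding T_def by (simp add: algebra_simps)
  also have "\<dots> < e * T" using e(1) by simp
  also have "\<dots> \<le> (l0 * m / (2*T)) * T" using e(4) T by (intro mult_right_mono) auto
  also have "\<dots> = l0 * m / 2" using T by simp
  also have "\<dots> < l0 * m" using l0 m by simp
  finally have "C * (e * (e + 2*M)) * cnt < l0 * m" .
  then show False using s1 s2 Dn(2) by linarith
qed

end


theorem lemma4p1:
  fixes \<Omega> :: "(real^'n::finite) set" and k :: 'n
    and f f' :: "real \<Rightarrow> real" and u :: "real^'n \<Rightarrow> real"
  assumes "CARD('n) \<ge> 3"
    and "open \<Omega>" and "connected \<Omega>" and "\<Omega> \<noteq> {}" and "bounded \<Omega>"
    and "simple_rot_sym k \<Omega>"
    and "\<And>t. (f has_real_derivative f' t) (at t)" and "continuous_on UNIV f'"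
    and "convex_on UNIV f"
    and "C2_on \<Omega> u" and "continuous_on (closure \<Omega>) u"
    and "\<And>x. x \<in> \<Omega> \<Longrightarrow> - laplacian u x = f (u x)"
    and "\<And>x. x \<in> frontier \<Omega> \<Longrightarrow> u x = 0"
    and "stable \<Omega> f' u"
  shows "\<forall>x\<in>\<Omega>. u (reflect k x) = u x"
proof -
  interpret setting \<Omega> k f f' u
    by (rule setting.intro) (fact assms)+
  show ?thesis
  proof
    fix x assume x: "x \<in> \<Omega>"
    have "u x \<le> u (reflect k x)" using half x by blast
    moreover have "u (reflect k x) \<le> u (reflect k (reflect k x))" using half R_in[OF x] by blast
    ultimately show "u (reflect k x) = u x" by simp
  qed
qed

end
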